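(* Let $A$ be a meet-semilattice and $\kappa$ a regular cardinal. Then $A$ is a complete lattice that is a $\kappa$-frame if and only if $\mathcal{BL}_\kappa(\mathcal{DM} A)=A$.
   Context: $\mathcal{DM} A$ is the complete lattice of normal ideals of $A$. An existing join $\bigvee S$ is distributive if $a\wedge\bigvee S=\bigvee\{a\wedge s:s\in S\}$ for all $a$. $\mathcal{BL} A$ is the frame of D-ideals of $A$ (downsets containing $\bigvee S$ for every subset $S$ with distributive join), and $A$ is identified with $\{{\downarrow}a:a\in A\}\subseteq\mathcal{DM} A\subseteq\mathcal{BL} A$. $\mathcal{BL}_\kappa(\mathcal{DM} A)$ is the sub-$\kappa$-frame of $\mathcal{BL} A$ generated by $\mathcal{DM} A$ (closure under finite meets and joins of fewer than $\kappa$ elements computed in $\mathcal{BL} A$). A $\kappa$-frame is a meet-semilattice in which all joins of fewer than $\kappa$ elements exist and are distributive. *)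

theory Defs
  imports Main
begin

definition upper_bounds :: "'a::order set \<Rightarrow> 'a set" where
  "upper_bounds S = {x. \<forall>s\<in>S. s \<le> x}"

definition lower_bounds :: "'a::order set \<Rightarrow> 'a set" where
  "lower_bounds S = {x. \<forall>s\<in>S. x \<le> s}"

definition is_join :: "'a::order set \<Rightarrow> 'a \<Rightarrow> bool" where
  "is_join S x \<longleftrightarrow> x \<in> upper_bounds S \<and> (\<forall>y\<in>upper_bounds S. x \<le> y)"

definition is_dist_join :: "'a::semilattice_inf set \<Rightarrow> 'a \<Rightarrow> bool" where
  "is_dist_join S x \<longleftrightarrow> is_join S x \<and> (\<forall>a. is_join ((\<lambda>s. inf a s) ` S) (inf a x))"

definition DM :: "'a::order set set" where
  "DM = {I. I = lower_bounds (upper_bounds I)}"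

definition downset :: "'a::order set \<Rightarrow> bool" where
  "downset I \<longleftrightarrow> (\<forall>x\<in>I. \<forall>y. y \<le> x \<longrightarrow> y \<in> I)"

definition D_ideal :: "'a::semilattice_inf set \<Rightarrow> bool" where
  "D_ideal I \<longleftrightarrow> downset I \<and> (\<forall>S x. S \<subseteq> I \<and> is_dist_join S x \<longrightarrow> x \<in> I)"

definition BL :: "'a::semilattice_inf set set" where
  "BL = {I. D_ideal I}"

definition BL_Join :: "'a::semilattice_inf set set \<Rightarrow> 'a set" where
  "BL_Join \<F> = \<Inter>{I. D_ideal I \<and> \<Union>\<F> \<subseteq> I}"

text \<open>BL_kappa(DM A): the sub-kappa-frame of BL A generated by DM A
  (closure of DM A under finite meets, i.e. intersections, and joins in BL A
   of fewer than kappa elements)\<close>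
inductive_set BL_kappa_DM :: "'k rel \<Rightarrow> 'a::semilattice_inf set set" for \<kappa> :: "'k rel" where
  base: "I \<in> DM \<Longrightarrow> I \<in> BL_kappa_DM \<kappa>"
| top: "UNIV \<in> BL_kappa_DM \<kappa>"
| meet: "I \<in> BL_kappa_DM \<kappa> \<Longrightarrow> J \<in> BL_kappa_DM \<kappa> \<Longrightarrow> I \<inter> J \<in> BL_kappa_DM \<kappa>"
| join: "(\<And>F. F \<in> \<F> \<Longrightarrow> F \<in> BL_kappa_DM \<kappa>) \<Longrightarrow> (card_of \<F>, \<kappa>) \<in> ordLess \<Longrightarrow> BL_Join \<F> \<in> BL_kappa_DM \<kappa>"

definition complete_lattice_ord :: "'a::order itself \<Rightarrow> bool" where
  "complete_lattice_ord _ \<longleftrightarrow> (\<forall>S::'a set. \<exists>x. is_join S x)"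

definition kappa_frame :: "'k rel \<Rightarrow> 'a::semilattice_inf itself \<Rightarrow> bool" where
  "kappa_frame \<kappa> _ \<longleftrightarrow> (\<forall>S::'a set. (card_of S, \<kappa>) \<in> ordLess \<longrightarrow> (\<exists>x. is_dist_join S x))"

end

theory Submission
  imports Defs
begin

lemma principal_D_ideal: "D_ideal {..(x::'a::semilattice_inf)}"
  unfolding D_ideal_def downset_def is_dist_join_def is_join_def upper_bounds_def
  by auto

lemma BL_Join_least: "D_ideal I \<Longrightarrow> \<Union>F \<subseteq> I \<Longrightarrow> BL_Join F \<subseteq> I"
  unfolding BL_Join_def by auto

lemma principal_DM: "{..(a::'a::order)} \<in> DM"
  unfolding DM_def lower_bounds_def upper_bounds_def by auto

lemma DM_principal:
  assumes "complete_lattice_ord TYPE('a::order)" "(I::'a set) \<in> DM"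
  shows "I \<in> range (\<lambda>a. {..a})"
proof -
  obtain a where a: "is_join I a" using assms(1) unfolding complete_lattice_ord_def by blast
  have "lower_bounds (upper_bounds I) = {..a}"
    using a unfolding is_join_def lower_bounds_def by (auto intro: order_trans)
  thus ?thesis using assms(2) unfolding DM_def by auto
qed

lemma join_principal:
  assumes "is_dist_join (S::'a::semilattice_inf set) x"
  shows "BL_Join ((\<lambda>a. {..a}) ` S) = {..x}"
proof
  show "BL_Join ((\<lambda>a. {..a}) ` S) \<subseteq> {..x}"
    apply (rule BL_Join_least[OF principal_D_ideal])
    using assms unfolding is_dist_join_def is_join_def upper_bounds_def
    by (auto intro: order_trans)
next
  show "{..x} \<subseteq> BL_Join ((\<lambda>a. {..a}) ` S)"
    unfolding BL_Join_def
  proof (clarsimp)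
    fix y I assume y: "y \<le> x" and I: "D_ideal I" "\<Union>((\<lambda>a. {..a}) ` S) \<subseteq> I"
    have "S \<subseteq> I" using I(2) by auto
    hence "x \<in> I" using I(1) assms unfolding D_ideal_def by blast
    thus "y \<in> I" using I(1) y unfolding D_ideal_def downset_def by blast
  qed
qed

theorem theorem4p14:
  fixes \<kappa> :: "'k rel"
  assumes "Cinfinite \<kappa>" and "regularCard \<kappa>"
  shows "(complete_lattice_ord TYPE('a::semilattice_inf) \<and> kappa_frame \<kappa> TYPE('a))
     \<longleftrightarrow> (BL_kappa_DM \<kappa> :: 'a set set) = range (\<lambda>a. {..a})"
proof
  assume H: "complete_lattice_ord TYPE('a::semilattice_inf) \<and> kappa_frame \<kappa> TYPE('a)"
  have sub: "I \<in> range (\<lambda>a. {..a})" if "I \<in> (BL_kappa_DM \<kappa> :: 'a set set)" for I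
    using that
  proof (induction rule: BL_kappa_DM.induct)
    case (base I) thus ?case using DM_principal H by blast
  next
    case top
    obtain a :: 'a where a: "is_join UNIV a" using H unfolding complete_lattice_ord_def by blast
    have "UNIV = {..a}" using a unfolding is_join_def upper_bounds_def by auto
    thus ?case by blast
  next
    case (meet I J)
    then obtain a b where "I = {..a}" "J = {..b}" by blast
    hence "I \<inter> J = {..inf a b}" by auto
    thus ?case by blast
  next
    case (join \<F>)
    define f where "f F = (SOME a. F = {..a})" for F :: "'a set"
    have ff: "F = {..f F}" if "F \<in> \<F>" for F
    proof -
      have "\<exists>a. F = {..a}" using join.IH that by blast
      thus ?thesis unfolding f_def by (rule someI_ex)
    qed
    have FS: "\<F> = (\<lambda>a. {..a}) ` (f ` \<F>)"
    proof
      show "\<F> \<subseteq> (\<lambda>a. {..a}) ` (f ` \<F>)" using ff by blast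
      show "(\<lambda>a. {..a}) ` (f ` \<F>) \<subseteq> \<F>" using ff by auto
    qed
    have "(card_of (f ` \<F>), \<kappa>) \<in> ordLess"
      using card_of_image ordLeq_ordLess_trans join.hyps by blast
    then obtain x where "is_dist_join (f ` \<F>) x" using H unfolding kappa_frame_def by blast
    hence "BL_Join \<F> = {..x}" using join_principal FS by metis
    thus ?case by blast
  qed
  have "{..a} \<in> (BL_kappa_DM \<kappa> :: 'a set set)" for a :: 'a
    by (rule BL_kappa_DM.base[OF principal_DM])
  thus "(BL_kappa_DM \<kappa> :: 'a set set) = range (\<lambda>a. {..a})" using sub by blast
next
  assume E: "(BL_kappa_DM \<kappa> :: 'a set set) = range (\<lambda>a. {..a})"
  have cl: "complete_lattice_ord TYPE('a)"
    unfolding complete_lattice_ord_def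
  proof
    fix S :: "'a set"
    have "lower_bounds (upper_bounds S) \<in> (BL_kappa_DM \<kappa> :: 'a set set)"
      by (rule BL_kappa_DM.base) (auto simp: DM_def lower_bounds_def upper_bounds_def)
    then obtain a where a: "lower_bounds (upper_bounds S) = {..a}" using E by blast
    have "is_join S a"
      using a unfolding is_join_def lower_bounds_def upper_bounds_def set_eq_iff
      by auto
    thus "\<exists>x. is_join S x" by blast
  qed
  have kf: "kappa_frame \<kappa> TYPE('a)"
    unfolding kappa_frame_def
  proof (intro allI impI)
    fix S :: "'a set"
    assume S: "(card_of S, \<kappa>) \<in> ordLess"
    let ?F = "(\<lambda>a. {..a}) ` S"
    have "(card_of ?F, \<kappa>) \<in> ordLess"
      using card_of_image ordLeq_ordLess_trans S by blast
    hence "BL_Join ?F \<in> (BL_kappa_DM \<kappa> :: 'a set set)"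
      by (intro BL_kappa_DM.join) (auto intro: BL_kappa_DM.base principal_DM)
    then obtain x where x: "BL_Join ?F = {..x}" using E by blast
    have ub: "s \<le> x" if "s \<in> S" for s
    proof -
      have "s \<in> BL_Join ?F" unfolding BL_Join_def using that by auto
      thus ?thesis using x by auto
    qed
    have jn: "is_join S x"
      unfolding is_join_def
    proof
      show "x \<in> upper_bounds S" using ub unfolding upper_bounds_def by auto
      show "\<forall>y\<in>upper_bounds S. x \<le> y"
      proof
        fix y assume "y \<in> upper_bounds S"
        hence "BL_Join ?F \<subseteq> {..y}"
          by (intro BL_Join_least principal_D_ideal) (auto simp: upper_bounds_def intro: order_trans)
        thus "x \<le> y" using x by auto
      qed
    qed
    have "is_join ((\<lambda>s. inf a s) ` S) (inf a x)" for a
      unfolding is_join_def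
    proof
      show "inf a x \<in> upper_bounds ((\<lambda>s. inf a s) ` S)"
        using ub unfolding upper_bounds_def by (auto intro: le_infI2)
      show "\<forall>y\<in>upper_bounds ((\<lambda>s. inf a s) ` S). inf a x \<le> y"
      proof
        fix y assume y: "y \<in> upper_bounds ((\<lambda>s. inf a s) ` S)"
        let ?J = "{z. inf a z \<le> y}"
        have DJ: "D_ideal ?J"
          unfolding D_ideal_def downset_def
        proof (intro conjI allI ballI impI)
          fix z w assume "z \<in> ?J" "w \<le> z"
          thus "w \<in> ?J" by (auto intro: order_trans inf_mono)
        next
          fix T t assume "T \<subseteq> ?J \<and> is_dist_join T t"
          hence "T \<subseteq> ?J" "is_join ((\<lambda>s. inf a s) ` T) (inf a t)"
            unfolding is_dist_join_def by auto
          thus "t \<in> ?J" unfolding is_join_def upper_bounds_def by auto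
        qed
        have "\<Union>?F \<subseteq> ?J"
          using y unfolding upper_bounds_def by (auto intro: order_trans inf_mono)
        hence "BL_Join ?F \<subseteq> ?J" by (rule BL_Join_least[OF DJ])
        thus "inf a x \<le> y" using x by auto
      qed
    qed
    thus "\<exists>x. is_dist_join S x" using jn unfolding is_dist_join_def by blast
  qed
  show "complete_lattice_ord TYPE('a) \<and> kappa_frame \<kappa> TYPE('a)" using cl kf by blast
qed

end
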